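(* In the setting of the controlled system $\dot g=T_eR_g(\xi)$, $\dot\xi+\sharp[\mathrm{ad}^*_\xi\flat(\xi)]=\sum_a u^af_a$ with $\mathfrak{g}=\mathfrak{d}\oplus\mathfrak{f}$, let $u^*$ be the unique control law making $\mathfrak{d}$ a virtual nonholonomic constraint. Then every solution $\xi(t)$ of the closed-loop system with $\xi(0)\in\mathfrak{d}$ satisfies $$\dot\xi+\nabla^{\mathfrak{c}}_\xi\xi=0,$$ where $\nabla^{\mathfrak{c}}$ is the induced constrained connection; and $\mathfrak{d}$ is geodesically invariant for $\nabla^{\mathfrak{c}}$, i.e. solutions of $\dot\xi+\nabla^{\mathfrak{c}}_\xi\xi=0$ with $\xi(0)\in\mathfrak{d}$ remain in $\mathfrak{d}$.
   Context: $G$ is an $n$-dimensional Lie group with Lie algebra $\mathfrak{g}=T_eG$, an inner product $\langle\cdot,\cdot\rangle$ on $\mathfrak{g}$ inducing a right-invariant metric on $G$ with Levi-Civita connection $\nabla$; $R_g(h)=hg$, $\xi_R(g)=T_eR_g\xi$. $\flat(\xi)(\eta)=\langle\xi,\eta\rangle$, $\sharp=\flat^{-1}$, $\mathrm{ad}^*_\xi$ dual of $\mathrm{ad}_\xi=[\xi,\cdot]$. $f_1,\dots,f_m\in\mathfrak{g}$ are linearly independent spanning $\mathfrak{f}$, $\mathfrak{d}$ is a subspace with $\mathfrak{g}=\mathfrak{d}\oplus\mathfrak{f}$, with projections $\mathfrak{p}:\mathfrak{g}\to\mathfrak{d}$, $\mathfrak{q}:\mathfrak{g}\to\mathfrak{f}$.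 The control law $u^*(\xi)=(\tau^1(\xi),\dots,\tau^m(\xi))$ is defined by $\sharp[\mathrm{ad}^*_\xi\flat(\xi)]=\eta(\xi)+\sum_b\tau^b(\xi)f_b$ with $\eta(\xi)\in\mathfrak{d}$. The Riemannian $\mathfrak{g}$-connection is $\nabla^{\mathfrak{g}}_\xi\eta:=(\nabla_{\xi_R}\eta_R)(e)$, and the induced constrained connection is $\nabla^{\mathfrak{c}}_\xi\eta:=\nabla^{\mathfrak{g}}_\xi\eta+\nabla^{\mathfrak{g}}_\xi(\mathfrak{q}(\eta))-\mathfrak{q}(\nabla^{\mathfrak{g}}_\xi\eta)$. *)

theory Defs
  imports "HOL-Analysis.Analysis"
begin

text \<open>The Lie algebra g is modelled as a finite-dimensional real inner product space
  (type class euclidean_space, whose inner product is the given inner product on g)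
  together with a Lie bracket br.\<close>

definition lie_bracket :: "('a::real_vector \<Rightarrow> 'a \<Rightarrow> 'a) \<Rightarrow> bool" where
  "lie_bracket br \<longleftrightarrow> bilinear br \<and> (\<forall>x y. br x y = - br y x) \<and>
     (\<forall>x y z. br x (br y z) + br y (br z x) + br z (br x y) = 0)"

definition flat :: "'a::real_inner \<Rightarrow> ('a \<Rightarrow> real)" where
  "flat \<xi> = (\<lambda>\<eta>. inner \<xi> \<eta>)"

definition sharp :: "('a::real_inner \<Rightarrow> real) \<Rightarrow> 'a" where
  "sharp \<alpha> = (THE v. flat v = \<alpha>)"

definition ad_star :: "('a \<Rightarrow> 'a \<Rightarrow> 'a) \<Rightarrow> 'a \<Rightarrow> ('a \<Rightarrow> real) \<Rightarrow> ('a \<Rightarrow> real)" where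
  "ad_star br \<xi> \<alpha> = (\<lambda>\<eta>. \<alpha> (br \<xi> \<eta>))"

text \<open>Riemannian g-connection: nabla^g_xi eta = (nabla_{xi_R} eta_R)(e) for the
  Levi-Civita connection of the right-invariant metric.  Restricted to right-invariant
  fields, the Levi-Civita conditions read: torsion-free
  nabla_xi eta - nabla_eta xi = [xi_R, eta_R](e) = -[xi,eta], and metric compatibility
  <nabla_xi eta, zeta> + <eta, nabla_xi zeta> = 0 (inner products of right-invariant
  fields are constant).  These determine the connection uniquely (Koszul).\<close>
definition nabla_g :: "('a::real_inner \<Rightarrow> 'a \<Rightarrow> 'a) \<Rightarrow> 'a \<Rightarrow> 'a \<Rightarrow> 'a" where
  "nabla_g br = (THE N. (\<forall>\<xi> \<eta>. N \<xi> \<eta> - N \<eta> \<xi> = - br \<xi> \<eta>) \<and>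
                        (\<forall>\<xi> \<eta> \<zeta>. inner (N \<xi> \<eta>) \<zeta> + inner \<eta> (N \<xi> \<zeta>) = 0))"

definition proj_along :: "'a::real_vector set \<Rightarrow> 'a set \<Rightarrow> 'a \<Rightarrow> 'a" where
  "proj_along D F x = (THE y. y \<in> F \<and> x - y \<in> D)"

definition nabla_c :: "('a::real_inner \<Rightarrow> 'a \<Rightarrow> 'a) \<Rightarrow> 'a set \<Rightarrow> 'a set \<Rightarrow> 'a \<Rightarrow> 'a \<Rightarrow> 'a" where
  "nabla_c br D F \<xi> \<eta> = nabla_g br \<xi> \<eta> + nabla_g br \<xi> (proj_along D F \<eta>)
                          - proj_along D F (nabla_g br \<xi> \<eta>)"

end

theory Submission
  imports Defs
begin


lemma inner_self_deriv:
  fixes z :: "real \<Rightarrow> 'a::real_inner"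
  assumes "(z has_vector_derivative z') (at s within S)"
  shows "((\<lambda>s. z s \<bullet> z s) has_real_derivative 2 * (z s \<bullet> z')) (at s within S)"
proof -
  have d: "(z has_derivative (\<lambda>h. h *\<^sub>R z')) (at s within S)"
    using assms by (simp add: has_vector_derivative_def)
  have "((\<lambda>s. z s \<bullet> z s) has_derivative (\<lambda>h. z s \<bullet> (h *\<^sub>R z') + (h *\<^sub>R z') \<bullet> z s)) (at s within S)"
    by (rule has_derivative_inner[OF d d])
  moreover have "(\<lambda>h. z s \<bullet> (h *\<^sub>R z') + (h *\<^sub>R z') \<bullet> z s) = (*) (2 * (z s \<bullet> z'))"
    by (auto simp: inner_commute algebra_simps)
  ultimately show ?thesis by (simp add: has_field_derivative_def)
qed

lemma gron:
  fixes z :: "real \<Rightarrow> 'a::real_inner"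
  assumes ab: "a \<le> b" and c: "c \<ge> 0"
    and der: "\<And>s. s \<in> {a..b} \<Longrightarrow> (z has_vector_derivative z' s) (at s within {a..b})"
    and bnd: "\<And>s. s \<in> {a..b} \<Longrightarrow> norm (z' s) \<le> c * norm (z s)"
  shows "(z a = 0 \<longrightarrow> z b = 0) \<and> (z b = 0 \<longrightarrow> z a = 0)"
proof -
  have key: "\<bar>z s \<bullet> z' s\<bar> \<le> c * (z s \<bullet> z s)" if "s \<in> {a..b}" for s
  proof -
    have "\<bar>z s \<bullet> z' s\<bar> \<le> norm (z s) * norm (z' s)" by (rule Cauchy_Schwarz_ineq2)
    also have "\<dots> \<le> norm (z s) * (c * norm (z s))"
      using bnd[OF that] by (simp add: mult_left_mono)
    also have "\<dots> = c * (z s \<bullet> z s)" by (simp add: power2_norm_eq_inner[symmetric] power2_eq_square)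
    finally show ?thesis .
  qed
  define f where "f = (\<lambda>s. exp (- (2*c) * s) * (z s \<bullet> z s))"
  define g where "g = (\<lambda>s. exp ((2*c) * s) * (z s \<bullet> z s))"
  have fd: "(f has_real_derivative (exp (- (2*c) * s) * (- (2*c)) * (z s \<bullet> z s) + exp (- (2*c) * s) * (2 * (z s \<bullet> z' s)))) (at s within {a..b})"
    if "s \<in> {a..b}" for s
    unfolding f_def
    using inner_self_deriv[OF der[OF that]] by (auto intro!: derivative_eq_intros)
  have gd: "(g has_real_derivative (exp ((2*c) * s) * (2*c) * (z s \<bullet> z s) + exp ((2*c) * s) * (2 * (z s \<bullet> z' s)))) (at s within {a..b})"
    if "s \<in> {a..b}" for s
    unfolding g_def
    using inner_self_deriv[OF der[OF that]] by (auto intro!: derivative_eq_intros)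
  define Fd where "Fd = (\<lambda>s. exp (- (2*c) * s) * (- (2*c)) * (z s \<bullet> z s) + exp (- (2*c) * s) * (2 * (z s \<bullet> z' s)))"
  define Gd where "Gd = (\<lambda>s. exp ((2*c) * s) * (2*c) * (z s \<bullet> z s) + exp ((2*c) * s) * (2 * (z s \<bullet> z' s)))"
  have "\<exists>x\<in>{a..b}. f b - f a = (\<lambda>s. (*) (Fd s)) x (b - a)"
    by (rule mvt_very_simple[OF ab]) (use fd in \<open>auto simp: has_field_derivative_def Fd_def\<close>)
  then obtain x where x: "x \<in> {a..b}" and fx: "f b - f a = Fd x * (b - a)" by auto
  have "\<exists>x\<in>{a..b}. g b - g a = (\<lambda>s. (*) (Gd s)) x (b - a)"
    by (rule mvt_very_simple[OF ab]) (use gd in \<open>auto simp: has_field_derivative_def Gd_def\<close>)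
  then obtain y where y: "y \<in> {a..b}" and gy: "g b - g a = Gd y * (b - a)" by auto
  have "exp (- (2*c) * x) * (- (2*c)) * (z x \<bullet> z x) + exp (- (2*c) * x) * (2 * (z x \<bullet> z' x)) \<le> 0"
  proof -
    have "z x \<bullet> z' x \<le> c * (z x \<bullet> z x)" using key[OF x] by linarith
    then have "(- (2*c)) * (z x \<bullet> z x) + (2 * (z x \<bullet> z' x)) \<le> 0" by linarith
    then have "exp (- (2*c) * x) * ((- (2*c)) * (z x \<bullet> z x) + (2 * (z x \<bullet> z' x))) \<le> 0"
      by (simp add: mult_nonneg_nonpos)
    then show ?thesis by (simp add: algebra_simps)
  qed
  then have f1: "f b \<le> f a" using fx ab unfolding Fd_def by (smt (verit) mult_nonpos_nonneg)
  have "exp ((2*c) * y) * (2*c) * (z y \<bullet> z y) + exp ((2*c) * y) * (2 * (z y \<bullet> z' y)) \<ge> 0"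
  proof -
    have "- (z y \<bullet> z' y) \<le> c * (z y \<bullet> z y)" using key[OF y] by linarith
    then have "(2*c) * (z y \<bullet> z y) + (2 * (z y \<bullet> z' y)) \<ge> 0" by linarith
    then have "exp ((2*c) * y) * ((2*c) * (z y \<bullet> z y) + (2 * (z y \<bullet> z' y))) \<ge> 0"
      by simp
    then show ?thesis by (simp add: algebra_simps)
  qed
  then have g1: "g a \<le> g b" using gy ab unfolding Gd_def by (smt (verit) mult_nonneg_nonneg)
  have "z a = 0 \<longrightarrow> z b = 0"
  proof
    assume "z a = 0"
    then have "f b \<le> 0" using f1 by (simp add: f_def)
    then have "z b \<bullet> z b \<le> 0" unfolding f_def by (simp add: mult_le_0_iff)
    then show "z b = 0" by (metis inner_ge_zero inner_eq_zero_iff order_antisym)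
  qed
  moreover have "z b = 0 \<longrightarrow> z a = 0"
  proof
    assume "z b = 0"
    then have "g a \<le> 0" using g1 by (simp add: g_def)
    then have "z a \<bullet> z a \<le> 0" unfolding g_def by (simp add: mult_le_0_iff)
    then show "z a = 0" by (metis inner_ge_zero inner_eq_zero_iff order_antisym)
  qed
  ultimately show ?thesis by blast
qed


definition adT :: "('a::euclidean_space \<Rightarrow> 'a \<Rightarrow> 'a) \<Rightarrow> 'a \<Rightarrow> 'a \<Rightarrow> 'a" where
  "adT br a b = (\<Sum>i\<in>Basis. (b \<bullet> br a i) *\<^sub>R i)"

definition NN :: "('a::euclidean_space \<Rightarrow> 'a \<Rightarrow> 'a) \<Rightarrow> 'a \<Rightarrow> 'a \<Rightarrow> 'a" where
  "NN br a b = - ((1/2) *\<^sub>R br a b) + (1/2) *\<^sub>R (adT br a b + adT br b a)"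

lemma adT_inner:
  fixes br :: "'a::euclidean_space \<Rightarrow> 'a \<Rightarrow> 'a"
  assumes "bilinear br"
  shows "adT br a b \<bullet> c = b \<bullet> br a c"
proof -
  have lin: "linear (br a)" using assms by (simp add: bilinear_def)
  have "b \<bullet> br a c = b \<bullet> br a (\<Sum>i\<in>Basis. (c \<bullet> i) *\<^sub>R i)"
    by (simp add: euclidean_representation)
  also have "\<dots> = (\<Sum>i\<in>Basis. (c \<bullet> i) * (b \<bullet> br a i))"
    by (simp add: linear_sum[OF lin] linear_scale[OF lin] inner_sum_right)
  also have "\<dots> = adT br a b \<bullet> c"
    by (simp add: adT_def inner_sum_right mult.commute inner_commute)
  finally show ?thesis by simp
qed

lemma adT_bilinear:
  fixes br :: "'a::euclidean_space \<Rightarrow> 'a \<Rightarrow> 'a"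
  assumes "bilinear br"
  shows "bilinear (adT br)"
proof -
  have l1: "\<And>x y z. br (x + y) z = br x z + br y z" and l2: "\<And>r x z. br (r *\<^sub>R x) z = r *\<^sub>R br x z"
    using assms by (auto simp: bilinear_def linear_iff)
  have e1: "adT br (x + y) z = adT br x z + adT br y z" for x y z
    by (simp add: adT_def l1 inner_add_right scaleR_add_left sum.distrib)
  have e2: "adT br (r *\<^sub>R x) z = r *\<^sub>R adT br x z" for r x z
    by (simp add: adT_def l2 scaleR_sum_right)
  have e3: "adT br z (x + y) = adT br z x + adT br z y" for x y z
    by (simp add: adT_def inner_add_left scaleR_add_left sum.distrib)
  have e4: "adT br z (r *\<^sub>R x) = r *\<^sub>R adT br z x" for r x z
    by (simp add: adT_def scaleR_sum_right)
  show ?thesis unfolding bilinear_def linear_iff using e1 e2 e3 e4 by simp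
qed

lemma NN_bilinear:
  fixes br :: "'a::euclidean_space \<Rightarrow> 'a \<Rightarrow> 'a"
  assumes "bilinear br"
  shows "bilinear (NN br)"
proof -
  have a: "bilinear (adT br)" by (rule adT_bilinear[OF assms])
  have b1: "\<And>x y z. adT br (x + y) z = adT br x z + adT br y z" "\<And>r x z. adT br (r *\<^sub>R x) z = r *\<^sub>R adT br x z"
     "\<And>x y z. adT br z (x + y) = adT br z x + adT br z y" "\<And>r x z. adT br z (r *\<^sub>R x) = r *\<^sub>R adT br z x"
    using a by (auto simp: bilinear_def linear_iff)
  have b2: "\<And>x y z. br (x + y) z = br x z + br y z" "\<And>r x z. br (r *\<^sub>R x) z = r *\<^sub>R br x z"
     "\<And>x y z. br z (x + y) = br z x + br z y" "\<And>r x z. br z (r *\<^sub>R x) = r *\<^sub>R br z x"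
    using assms by (auto simp: bilinear_def linear_iff)
  have e1: "NN br (x + y) z = NN br x z + NN br y z" for x y z
    unfolding NN_def b1 b2 by (simp add: scaleR_add_right)
  have e2: "NN br (r *\<^sub>R x) z = r *\<^sub>R NN br x z" for r x z
    unfolding NN_def b1 b2 by (simp add: algebra_simps)
  have e3: "NN br z (x + y) = NN br z x + NN br z y" for x y z
    unfolding NN_def b1 b2 by (simp add: scaleR_add_right)
  have e4: "NN br z (r *\<^sub>R x) = r *\<^sub>R NN br z x" for r x z
    unfolding NN_def b1 b2 by (simp add: algebra_simps)
  show ?thesis unfolding bilinear_def linear_iff using e1 e2 e3 e4 by simp
qed

lemma nabla_g_eq:
  fixes br :: "'a::euclidean_space \<Rightarrow> 'a \<Rightarrow> 'a"
  assumes lie: "lie_bracket br"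
  shows "nabla_g br = NN br"
proof -
  have bl: "bilinear br" and anti: "\<And>x y. br x y = - br y x" using lie unfolding lie_bracket_def by blast+
  have NNi: "NN br a b \<bullet> c = - (1/2) * (br a b \<bullet> c) + (1/2) * (b \<bullet> br a c + a \<bullet> br b c)" for a b c
    by (simp add: NN_def inner_add_left adT_inner[OF bl] inner_diff_left)
  have P1: "NN br x y - NN br y x = - br x y" for x y
  proof -
    have "NN br x y - NN br y x = - ((1/2) *\<^sub>R br x y) + (1/2) *\<^sub>R br y x" by (simp add: NN_def algebra_simps)
    also have "\<dots> = - ((1/2) *\<^sub>R br x y + (1/2) *\<^sub>R br x y)" using anti[of y x] by simp
    also have "\<dots> = - br x y" by (simp flip: scaleR_add_left)
    finally show ?thesis .
  qed
  have P2: "NN br x y \<bullet> z + y \<bullet> NN br x z = 0" for x y z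
  proof -
    have 1: "y \<bullet> NN br x z = NN br x z \<bullet> y" by (rule inner_commute)
    have 2: "br x z \<bullet> y = y \<bullet> br x z" "z \<bullet> br x y = br x y \<bullet> z" by (rule inner_commute)+
    have 3: "x \<bullet> br z y = - (x \<bullet> br y z)" using anti[of z y] by simp
    show ?thesis using 1 2 3 NNi[of x y z] NNi[of x z y] by (simp add: algebra_simps)
  qed
  show ?thesis unfolding nabla_g_def
  proof (rule the_equality)
    show "(\<forall>\<xi> \<eta>. NN br \<xi> \<eta> - NN br \<eta> \<xi> = - br \<xi> \<eta>) \<and> (\<forall>\<xi> \<eta> \<zeta>. NN br \<xi> \<eta> \<bullet> \<zeta> + \<eta> \<bullet> NN br \<xi> \<zeta> = 0)"
      using P1 P2 by blast
  next
    fix N assume H: "(\<forall>\<xi> \<eta>. N \<xi> \<eta> - N \<eta> \<xi> = - br \<xi> \<eta>) \<and> (\<forall>\<xi> \<eta> \<zeta>. N \<xi> \<eta> \<bullet> \<zeta> + \<eta> \<bullet> N \<xi> \<zeta> = 0)"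
    define T where "T = (\<lambda>a b c. (N a b - NN br a b) \<bullet> c)"
    have sym: "T a b c = T b a c" for a b c
    proof -
      have "N a b - N b a = NN br a b - NN br b a" using H P1 by simp
      then have "N a b - NN br a b = N b a - NN br b a" by (simp add: algebra_simps)
      then show ?thesis by (simp add: T_def)
    qed
    have skew: "T a b c = - T a c b" for a b c
    proof -
      have "N a b \<bullet> c + b \<bullet> N a c = 0" using H by blast
      moreover have "NN br a b \<bullet> c + b \<bullet> NN br a c = 0" by (rule P2)
      moreover have "b \<bullet> N a c = N a c \<bullet> b" "b \<bullet> NN br a c = NN br a c \<bullet> b" by (rule inner_commute)+
      ultimately show ?thesis unfolding T_def inner_diff_left by linarith
    qed
    have T0: "T a b c = 0" for a b c
    proof -
      have "T a b c = - T a c b" by (rule skew)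
      also have "\<dots> = - T c a b" using sym[of a c b] by simp
      also have "\<dots> = T c b a" using skew[of c a b] by simp
      also have "\<dots> = T b c a" using sym[of c b a] by simp
      also have "\<dots> = - T b a c" using skew[of b c a] by simp
      also have "\<dots> = - T a b c" using sym[of b a c] by simp
      finally show ?thesis by simp
    qed
    show "N = NN br"
    proof (intro ext)
      fix a b
      have "T a b (N a b - NN br a b) = 0" by (rule T0)
      then show "N a b = NN br a b" by (simp add: T_def)
    qed
  qed
qed

lemma sharp_flat: "sharp (flat (v::'a::real_inner)) = v"
  unfolding sharp_def
proof (rule the_equality)
  fix w assume "flat w = flat v"
  then have "w \<bullet> (w - v) = v \<bullet> (w - v)" by (metis flat_def)
  then have "(w - v) \<bullet> (w - v) = 0" by (simp add: inner_diff_left)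
  then show "w = v" by simp
qed simp

lemma sharp_ad:
  fixes br :: "'a::euclidean_space \<Rightarrow> 'a \<Rightarrow> 'a"
  assumes "bilinear br"
  shows "sharp (ad_star br x (flat x)) = adT br x x"
proof -
  have "ad_star br x (flat x) = flat (adT br x x)"
    by (auto simp: ad_star_def flat_def adT_inner[OF assms])
  then show ?thesis by (simp add: sharp_flat)
qed

lemma NN_diag:
  fixes br :: "'a::euclidean_space \<Rightarrow> 'a \<Rightarrow> 'a"
  assumes "lie_bracket br"
  shows "NN br x x = adT br x x"
proof -
  have "br x x = - br x x" using assms unfolding lie_bracket_def by blast
  then have "br x x + br x x = 0" by (metis add.right_inverse)
  then have "(2::real) *\<^sub>R br x x = 0" by (simp add: scaleR_2)
  then have "br x x = 0" by simp
  then show ?thesis by (simp add: NN_def scaleR_add_right[symmetric])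
qed

lemma NN_zero:
  fixes br :: "'a::euclidean_space \<Rightarrow> 'a \<Rightarrow> 'a"
  assumes "bilinear br"
  shows "NN br x 0 = 0"
  using NN_bilinear[OF assms] by (simp add: bilinear_def linear_0)


lemma gron_I:
  fixes z :: "real \<Rightarrow> 'a::real_inner"
  assumes I: "is_interval I" "0 \<in> I" "t \<in> I" and z0: "z 0 = 0"
    and der: "\<forall>s\<in>I. (z has_vector_derivative z' s) (at s within I)"
    and bnd: "\<exists>c\<ge>0. \<forall>s\<in>{min 0 t..max 0 t}. norm (z' s) \<le> c * norm (z s)"
  shows "z t = 0"
proof -
  have iv: "\<And>a b x. a \<in> I \<Longrightarrow> b \<in> I \<Longrightarrow> a \<le> x \<Longrightarrow> x \<le> b \<Longrightarrow> x \<in> I"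
    using I(1) unfolding is_interval_1 by blast
  have sub: "{min 0 t..max 0 t} \<subseteq> I"
  proof
    fix s assume s: "s \<in> {min 0 t..max 0 t}"
    show "s \<in> I"
    proof (cases "t \<ge> 0")
      case True then show ?thesis using iv[of 0 t s] s I by (simp add: min_def max_def)
    next
      case False then show ?thesis using iv[of t 0 s] s I by (simp add: min_def max_def)
    qed
  qed
  obtain c where c: "c \<ge> 0" "\<forall>s\<in>{min 0 t..max 0 t}. norm (z' s) \<le> c * norm (z s)" using bnd by blast
  have d: "\<And>s. s \<in> {min 0 t..max 0 t} \<Longrightarrow> (z has_vector_derivative z' s) (at s within {min 0 t..max 0 t})"
    using der sub by (meson has_vector_derivative_within_subset subsetD)
  have G: "(z (min 0 t) = 0 \<longrightarrow> z (max 0 t) = 0) \<and> (z (max 0 t) = 0 \<longrightarrow> z (min 0 t) = 0)"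
    by (rule gron[OF _ c(1) d]) (use c(2) in auto)
  show ?thesis
  proof (cases "t \<ge> 0")
    case True then show ?thesis using G z0 by (simp add: min_def max_def)
  next
    case False then show ?thesis using G z0 by (simp add: min_def max_def)
  qed
qed

lemma cont_bound:
  fixes \<xi> :: "real \<Rightarrow> 'a::real_normed_vector"
  assumes I: "is_interval I" "0 \<in> I" "t \<in> I"
    and der: "\<forall>s\<in>I. (\<xi> has_vector_derivative \<xi>' s) (at s within I)"
  shows "\<exists>B>0. \<forall>s\<in>{min 0 t..max 0 t}. norm (\<xi> s) \<le> B"
proof -
  have iv: "\<And>a b x. a \<in> I \<Longrightarrow> b \<in> I \<Longrightarrow> a \<le> x \<Longrightarrow> x \<le> b \<Longrightarrow> x \<in> I"
    using I(1) unfolding is_interval_1 by blast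
  have sub: "{min 0 t..max 0 t} \<subseteq> I"
  proof
    fix s assume s: "s \<in> {min 0 t..max 0 t}"
    show "s \<in> I"
    proof (cases "t \<ge> 0")
      case True then show ?thesis using iv[of 0 t s] s I by (simp add: min_def max_def)
    next
      case False then show ?thesis using iv[of t 0 s] s I by (simp add: min_def max_def)
    qed
  qed
  have "continuous_on I \<xi>"
    unfolding continuous_on_eq_continuous_within
    using der has_vector_derivative_continuous by blast
  then have "continuous_on {min 0 t..max 0 t} \<xi>" using sub continuous_on_subset by blast
  then have "compact (\<xi> ` {min 0 t..max 0 t})" by (rule compact_continuous_image[OF _ compact_Icc])
  then have "bounded (\<xi> ` {min 0 t..max 0 t})" by (rule compact_imp_bounded)
  then show ?thesis unfolding bounded_pos by auto
qed

lemma proj_props: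
  fixes D F :: "'a::real_vector set"
  assumes D: "subspace D" and F: "subspace F" and cap: "D \<inter> F = {0}"
    and sum: "{x + y | x y. x \<in> D \<and> y \<in> F} = UNIV"
  shows "proj_along D F x \<in> F \<and> x - proj_along D F x \<in> D"
proof -
  have ex: "\<exists>y. y \<in> F \<and> x - y \<in> D"
  proof -
    have "x \<in> {x + y | x y. x \<in> D \<and> y \<in> F}" using sum by simp
    then obtain d y where "x = d + y" "d \<in> D" "y \<in> F" by blast
    then show ?thesis by (intro exI[of _ y]) simp
  qed
  have un: "y1 = y2" if "y1 \<in> F \<and> x - y1 \<in> D" "y2 \<in> F \<and> x - y2 \<in> D" for y1 y2
  proof -
    have "y1 - y2 \<in> F" using that F by (simp add: subspace_diff)
    moreover have "(x - y2) - (x - y1) \<in> D" by (rule subspace_diff[OF D]) (use that in auto)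
    moreover have "(x - y2) - (x - y1) = y1 - y2" by simp
    ultimately have "y1 - y2 \<in> D \<inter> F" by (metis IntI)
    then show ?thesis using cap by auto
  qed
  show ?thesis unfolding proj_along_def
    by (rule theI') (use ex un in blast)
qed

lemma proj_eq:
  fixes D F :: "'a::real_vector set"
  assumes D: "subspace D" and F: "subspace F" and cap: "D \<inter> F = {0}"
    and sum: "{x + y | x y. x \<in> D \<and> y \<in> F} = UNIV"
    and y: "y \<in> F" "x - y \<in> D"
  shows "proj_along D F x = y"
proof -
  have p: "proj_along D F x \<in> F" "x - proj_along D F x \<in> D" using proj_props[OF assms(1-4)] by auto
  have "proj_along D F x - y \<in> F" using p y F by (simp add: subspace_diff)
  moreover have "(x - y) - (x - proj_along D F x) \<in> D" by (rule subspace_diff[OF D]) (use p y in auto)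
  moreover have "(x - y) - (x - proj_along D F x) = proj_along D F x - y" by simp
  ultimately have "proj_along D F x - y \<in> D \<inter> F" by (metis IntI)
  then show ?thesis using cap by auto
qed

lemma proj_linear:
  fixes D F :: "'a::real_vector set"
  assumes D: "subspace D" and F: "subspace F" and cap: "D \<inter> F = {0}"
    and sum: "{x + y | x y. x \<in> D \<and> y \<in> F} = UNIV"
  shows "linear (proj_along D F)"
proof (rule linearI)
  note p = proj_props[OF assms]
  fix x y :: 'a and r :: real
  show "proj_along D F (x + y) = proj_along D F x + proj_along D F y"
  proof (rule proj_eq[OF assms])
    show "proj_along D F x + proj_along D F y \<in> F" using p F by (simp add: subspace_add)
    have "(x - proj_along D F x) + (y - proj_along D F y) \<in> D" using p D by (simp add: subspace_add)
    then show "x + y - (proj_along D F x + proj_along D F y) \<in> D" by (simp add: algebra_simps)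
  qed
  show "proj_along D F (r *\<^sub>R x) = r *\<^sub>R proj_along D F x"
  proof (rule proj_eq[OF assms])
    show "r *\<^sub>R proj_along D F x \<in> F" using p F by (simp add: subspace_scale)
    have "r *\<^sub>R (x - proj_along D F x) \<in> D" using p D by (simp add: subspace_scale)
    then show "r *\<^sub>R x - r *\<^sub>R proj_along D F x \<in> D" by (simp add: algebra_simps)
  qed
qed

theorem mainTheorem12:
  fixes br :: "'a::euclidean_space \<Rightarrow> 'a \<Rightarrow> 'a"
    and fs :: "nat \<Rightarrow> 'a" and m :: nat
    and D :: "'a set"
    and tau :: "'a \<Rightarrow> nat \<Rightarrow> real"
  assumes lie: "lie_bracket br"
    and fs_inj: "inj_on fs {..<m}"
    and fs_indep: "independent (fs ` {..<m})"
    and D_sub: "subspace D"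
    and D_cap: "D \<inter> span (fs ` {..<m}) = {0}"
    and D_sum: "{x + y | x y. x \<in> D \<and> y \<in> span (fs ` {..<m})} = UNIV"
    and tau_def: "\<And>\<xi>. sharp (ad_star br \<xi> (flat \<xi>)) - (\<Sum>b<m. tau \<xi> b *\<^sub>R fs b) \<in> D"
  shows
    "(\<forall>(I::real set) (\<xi>::real \<Rightarrow> 'a).
        is_interval I \<and> 0 \<in> I \<and> \<xi> 0 \<in> D \<and>
        (\<forall>t\<in>I. (\<xi> has_vector_derivative
                  (- sharp (ad_star br (\<xi> t) (flat (\<xi> t)))
                   + (\<Sum>b<m. tau (\<xi> t) b *\<^sub>R fs b))) (at t within I))
        \<longrightarrow> (\<forall>t\<in>I. (\<xi> has_vector_derivative
                  (- nabla_c br D (span (fs ` {..<m})) (\<xi> t) (\<xi> t))) (at t within I)))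
     \<and>
     (\<forall>(I::real set) (\<xi>::real \<Rightarrow> 'a).
        is_interval I \<and> 0 \<in> I \<and> \<xi> 0 \<in> D \<and>
        (\<forall>t\<in>I. (\<xi> has_vector_derivative
                  (- nabla_c br D (span (fs ` {..<m})) (\<xi> t) (\<xi> t))) (at t within I))
        \<longrightarrow> (\<forall>t\<in>I. \<xi> t \<in> D))"
  
proof -
  define F where "F = span (fs ` {..<m})"
  define q where "q = proj_along D F"
  define N where "N = NN br"
  define A where "A = (\<lambda>x. adT br x x)"
  define S where "S = (\<lambda>x. \<Sum>b<m. tau x b *\<^sub>R fs b)"
  have bl: "bilinear br" using lie unfolding lie_bracket_def by blast
  have Fs: "subspace F" unfolding F_def by (rule subspace_span)
  have cap: "D \<inter> F = {0}" using D_cap F_def by simp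
  have sm: "{x + y | x y. x \<in> D \<and> y \<in> F} = UNIV" using D_sum F_def by simp
  note pp = proj_props[OF D_sub Fs cap sm]
  note pe = proj_eq[OF D_sub Fs cap sm]
  have qlin: "linear q" unfolding q_def by (rule proj_linear[OF D_sub Fs cap sm])
  have qbl: "bounded_linear q" using qlin by (simp add: linear_conv_bounded_linear)
  have qD: "q x = 0" if "x \<in> D" for x unfolding q_def by (rule pe) (use that Fs in \<open>auto simp: subspace_0\<close>)
  have qq: "q (q x) = q x" for x unfolding q_def by (rule pe) (use pp Fs in \<open>auto simp: subspace_0 D_sub\<close>)
  have q0D: "x \<in> D" if "q x = 0" for x using pp[of x] that unfolding q_def by simp
  have sharpA: "sharp (ad_star br x (flat x)) = A x" for x unfolding A_def by (rule sharp_ad[OF bl])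
  have SF: "S x \<in> F" for x unfolding S_def F_def
    by (intro span_sum span_mul span_base) auto
  have qA: "q (A x) = S x" for x
    unfolding q_def by (rule pe[OF SF]) (use tau_def[of x] sharpA[of x] S_def in simp)
  have NA: "N x x = A x" for x unfolding N_def A_def by (rule NN_diag[OF lie])
  have nc: "nabla_c br D F x x = A x + N x (q x) - q (A x)" for x
    unfolding nabla_c_def nabla_g_eq[OF lie] q_def[symmetric] N_def[symmetric] NA by simp
  have N0: "N x 0 = 0" for x unfolding N_def by (rule NN_zero[OF bl])
  have qminus: "q (- v) = - q v" for v using qlin by (simp add: linear_neg)
  have qdiff: "q (v - w) = q v - q w" for v w using qlin by (simp add: linear_diff)
  have qadd: "q (v + w) = q v + q w" for v w using qlin by (simp add: linear_add)
  show ?thesis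
  proof (intro conjI allI impI)
    fix I and \<xi> :: "real \<Rightarrow> 'a"
    assume H: "is_interval I \<and> 0 \<in> I \<and> \<xi> 0 \<in> D \<and>
        (\<forall>t\<in>I. (\<xi> has_vector_derivative
                  (- sharp (ad_star br (\<xi> t) (flat (\<xi> t)))
                   + (\<Sum>b<m. tau (\<xi> t) b *\<^sub>R fs b))) (at t within I))"
    have der: "\<forall>t\<in>I. (\<xi> has_vector_derivative - (A (\<xi> t) - q (A (\<xi> t)))) (at t within I)"
      using H by (simp add: sharpA qA S_def)
    have zder: "\<forall>t\<in>I. ((\<lambda>s. q (\<xi> s)) has_vector_derivative 0) (at t within I)"
    proof
      fix t assume "t \<in> I"
      then have "((\<lambda>s. q (\<xi> s)) has_vector_derivative q (- (A (\<xi> t) - q (A (\<xi> t))))) (at t within I)"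
        using der bounded_linear.has_vector_derivative[OF qbl] by blast
      then show "((\<lambda>s. q (\<xi> s)) has_vector_derivative 0) (at t within I)"
        by (simp add: qminus qdiff qq)
    qed
    have inD: "\<xi> t \<in> D" if "t \<in> I" for t
    proof -
      have "(\<lambda>s. q (\<xi> s)) t = 0"
        by (rule gron_I[where z' = "\<lambda>_. 0"]) (use H that zder qD in auto)
      then show ?thesis using q0D by simp
    qed
    show "\<forall>t\<in>I. (\<xi> has_vector_derivative
                  (- nabla_c br D (span (fs ` {..<m})) (\<xi> t) (\<xi> t))) (at t within I)"
    proof
      fix t assume t: "t \<in> I"
      have "nabla_c br D (span (fs ` {..<m})) (\<xi> t) (\<xi> t) = A (\<xi> t) - q (A (\<xi> t))"
        using nc[of "\<xi> t"] qD[OF inD[OF t]] N0 F_def by simp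
      then show "(\<xi> has_vector_derivative
                  (- nabla_c br D (span (fs ` {..<m})) (\<xi> t) (\<xi> t))) (at t within I)"
        using der t by simp
    qed
  next
    fix I and \<xi> :: "real \<Rightarrow> 'a"
    assume H: "is_interval I \<and> 0 \<in> I \<and> \<xi> 0 \<in> D \<and>
        (\<forall>t\<in>I. (\<xi> has_vector_derivative
                  (- nabla_c br D (span (fs ` {..<m})) (\<xi> t) (\<xi> t))) (at t within I))"
    have der: "\<forall>t\<in>I. (\<xi> has_vector_derivative - (A (\<xi> t) + N (\<xi> t) (q (\<xi> t)) - q (A (\<xi> t)))) (at t within I)"
      using H by (simp add: nc F_def[symmetric])
    have zder: "\<forall>t\<in>I. ((\<lambda>s. q (\<xi> s)) has_vector_derivative - q (N (\<xi> t) (q (\<xi> t)))) (at t within I)"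
    proof
      fix t assume "t \<in> I"
      then have "((\<lambda>s. q (\<xi> s)) has_vector_derivative q (- (A (\<xi> t) + N (\<xi> t) (q (\<xi> t)) - q (A (\<xi> t))))) (at t within I)"
        using der bounded_linear.has_vector_derivative[OF qbl] by blast
      then show "((\<lambda>s. q (\<xi> s)) has_vector_derivative - q (N (\<xi> t) (q (\<xi> t)))) (at t within I)"
        by (simp add: qminus qdiff qadd qq)
    qed
    obtain Kq where Kq: "Kq > 0" "\<And>x. norm (q x) \<le> norm x * Kq"
      using bounded_linear.pos_bounded[OF qbl] by blast
    have Nbb: "bounded_bilinear N" unfolding N_def using NN_bilinear[OF bl] bilinear_conv_bounded_bilinear by blast
    obtain KN where KN: "KN > 0" "\<And>x y. norm (N x y) \<le> norm x * norm y * KN"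
      using bounded_bilinear.pos_bounded[OF Nbb] by blast
    show "\<forall>t\<in>I. \<xi> t \<in> D"
    proof
      fix t assume t: "t \<in> I"
      obtain B where B: "B > 0" "\<forall>s\<in>{min 0 t..max 0 t}. norm (\<xi> s) \<le> B"
        using cont_bound[OF _ _ t der] H by blast
      have bnd: "\<exists>c\<ge>0. \<forall>s\<in>{min 0 t..max 0 t}. norm (- q (N (\<xi> s) (q (\<xi> s)))) \<le> c * norm (q (\<xi> s))"
      proof (intro exI[of _ "Kq * KN * B"] conjI ballI)
        show "0 \<le> Kq * KN * B" using Kq KN B by simp
        fix s assume s: "s \<in> {min 0 t..max 0 t}"
        have "norm (- q (N (\<xi> s) (q (\<xi> s)))) \<le> norm (N (\<xi> s) (q (\<xi> s))) * Kq" using Kq by simp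
        also have "\<dots> \<le> (norm (\<xi> s) * norm (q (\<xi> s)) * KN) * Kq"
          using KN Kq by (simp add: mult_right_mono)
        also have "\<dots> \<le> (B * norm (q (\<xi> s)) * KN) * Kq"
          using B s KN Kq by (intro mult_right_mono) (auto intro: mult_right_mono)
        also have "\<dots> = Kq * KN * B * norm (q (\<xi> s))" by (simp add: algebra_simps)
        finally show "norm (- q (N (\<xi> s) (q (\<xi> s)))) \<le> Kq * KN * B * norm (q (\<xi> s))" .
      qed
      have "(\<lambda>s. q (\<xi> s)) t = 0"
        by (rule gron_I[OF _ _ t _ zder bnd]) (use H qD in auto)
      then show "\<xi> t \<in> D" using q0D by simp
    qed
  qed
qed

end
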